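(* Let $(X,d)$ be an $F$-space with non-decreasing metric $d$ and let $\mathcal{E}(x)=\{e_n(x)\}_{n=0}^\infty$ be a scale on $X$. Then $X_{\mathcal{E}}:=\{x\in X:\mathcal{E}(x)\in c_0\}$ is a closed vector subspace of $X$.
   Context: An $F$-space is a complete metric vector space with translation-invariant metric $d$; $d$ is non-decreasing if $d(\alpha x,0)\le d(x,0)$ for $0\le\alpha\le1$. Write $\|x\|=d(x,0)$. A map $\mathcal{E}:X\to\ell^\infty$, $\mathcal{E}(x)=\{e_n(x)\}_{n=0}^\infty$ with each $e_n:X\to[0,\infty)$, is a scale on $X$ if: (i) there is $C_1>0$ with $C_1\|x\|\ge e_n(x)\ge e_{n+1}(x)$ for all $x\in X$, $n\in\mathbb{N}$, and each $e_n$ is continuous; (ii) there exist a strictly increasing $K:\mathbb{N}\to\mathbb{N}$ and $C_2>0$ with $e_{K(n)}(x+y)\le C_2(e_n(x)+e_n(y))$ for all $x,y\in X$, $n\in\mathbb{N}$; (iii) there is a function $\phi:[0,\infty)\to[0,\infty)$ with $e_n(\lambda x)\le\phi(|\lambda|)e_n(x)$ for all scalars $\lambda$ and $x\in X$, and $e_n(-x)=e_n(x)$ for all $x$. $c_0$ denotes the space of sequences converging to $0$. *)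

theory Defs
  imports "HOL-Analysis.Analysis"
begin

text \<open>An F-space over a scalar field 'k (e.g. real or complex): the type 'a carries a
  complete metric (class complete_space, metric dist), a vector space structure with
  scalar multiplication sm, the metric is translation invariant, and scalar
  multiplication is jointly continuous (so 'a is a metric topological vector space;
  continuity of addition follows from translation invariance).\<close>
definition F_space :: "('k::real_normed_field \<Rightarrow> 'a::{ab_group_add,complete_space} \<Rightarrow> 'a) \<Rightarrow> bool" where
  "F_space sm \<longleftrightarrow>
     vector_space sm \<and>
     (\<forall>x y z::'a. dist (x + z) (y + z) = dist x y) \<and>
     continuous_on UNIV (\<lambda>(c, x). sm c x)"

definition nondecreasing_metric :: "('k::real_normed_field \<Rightarrow> 'a::{ab_group_add,metric_space} \<Rightarrow> 'a) \<Rightarrow> bool" where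
  "nondecreasing_metric sm \<longleftrightarrow>
     (\<forall>(\<alpha>::real) x. 0 \<le> \<alpha> \<and> \<alpha> \<le> 1 \<longrightarrow> dist (sm (of_real \<alpha>) x) 0 \<le> dist x 0)"

definition is_scale :: "('k::real_normed_field \<Rightarrow> 'a::{ab_group_add,metric_space} \<Rightarrow> 'a)
     \<Rightarrow> (nat \<Rightarrow> 'a \<Rightarrow> real) \<Rightarrow> bool" where
  "is_scale sm e \<longleftrightarrow>
     (\<forall>n x. 0 \<le> e n x) \<and>
     (\<exists>C1>0. \<forall>x n. e n x \<le> C1 * dist x 0 \<and> e (Suc n) x \<le> e n x) \<and>
     (\<forall>n. continuous_on UNIV (e n)) \<and>
     (\<exists>K C2. strict_mono (K :: nat \<Rightarrow> nat) \<and> C2 > 0 \<and>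
        (\<forall>x y n. e (K n) (x + y) \<le> C2 * (e n x + e n y))) \<and>
     (\<exists>\<phi>::real \<Rightarrow> real. (\<forall>t\<ge>0. 0 \<le> \<phi> t) \<and>
        (\<forall>c x n. e n (sm c x) \<le> \<phi> (norm c) * e n x)) \<and>
     (\<forall>n x. e n (- x) = e n x)"

definition scale_space :: "(nat \<Rightarrow> 'a \<Rightarrow> real) \<Rightarrow> 'a set" where
  "scale_space e = {x. (\<lambda>n. e n x) \<longlonglongrightarrow> 0}"

end

theory Submission
  imports Defs
begin

lemma dec_tail:
  fixes f :: "nat \<Rightarrow> real" and K :: "nat \<Rightarrow> nat"
  assumes dec: "\<And>n. f (Suc n) \<le> f n" and nn: "\<And>n. 0 \<le> f n"
    and ev: "\<And>\<epsilon>. \<epsilon> > 0 \<Longrightarrow> \<exists>N. \<forall>n\<ge>N. f (K n) < \<epsilon>"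
  shows "f \<longlonglongrightarrow> 0"
proof (rule LIMSEQ_I)
  fix r :: real assume r: "r > 0"
  obtain N where N: "\<forall>n\<ge>N. f (K n) < r" using ev[OF r] by blast
  have ds: "decseq f" using dec by (simp add: decseq_SucI)
  show "\<exists>no. \<forall>n\<ge>no. norm (f n - 0) < r"
  proof (intro exI allI impI)
    fix n assume "K N \<le> n"
    then have "f n \<le> f (K N)" using ds by (simp add: decseq_def)
    moreover have "f (K N) < r" using N[rule_format, OF order_refl] .
    ultimately show "norm (f n - 0) < r" using nn[of n] by auto
  qed
qed

lemma dec_tail2:
  fixes f :: "nat \<Rightarrow> real" and K :: "nat \<Rightarrow> nat"
  assumes dec: "\<And>n. f (Suc n) \<le> f n" and nn: "\<And>n. 0 \<le> f n"
    and g: "g \<longlonglongrightarrow> 0" and b: "\<And>n. f (K n) \<le> g n"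
  shows "f \<longlonglongrightarrow> 0"
proof (rule dec_tail[where K=K and f=f, OF dec nn])
  fix \<epsilon> :: real assume "\<epsilon> > 0"
  then obtain N where "\<forall>n\<ge>N. norm (g n - 0) < \<epsilon>" using LIMSEQ_D[OF g] by blast
  then have "\<forall>n\<ge>N. f (K n) < \<epsilon>"
    using b by (smt (verit) real_norm_def)
  then show "\<exists>N. \<forall>n\<ge>N. f (K n) < \<epsilon>" by blast
qed

theorem mainTheorem6:
  fixes sm :: "'k::real_normed_field \<Rightarrow> 'a::{ab_group_add,complete_space} \<Rightarrow> 'a"
    and e :: "nat \<Rightarrow> 'a \<Rightarrow> real"
  assumes "F_space sm"
    and "nondecreasing_metric sm"
    and "is_scale sm e"
  shows "module.subspace sm (scale_space e) \<and> closed (scale_space e)"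
proof -
  have vs: "vector_space sm" and ti: "\<And>x y z::'a. dist (x + z) (y + z) = dist x y"
    using assms(1) unfolding F_space_def by auto
  have md: "module sm" using vs by (simp add: module_iff_vector_space)
  note S = assms(3)[unfolded is_scale_def]
  from S have nn: "\<And>n x. 0 \<le> e n x" by blast
  from S obtain C1 where C1a: "C1 > 0" and C1b: "\<forall>x n. e n x \<le> C1 * dist x 0 \<and> e (Suc n) x \<le> e n x"
    by blast
  have C1: "C1 > 0" "\<And>x n. e n x \<le> C1 * dist x 0" "\<And>x n. e (Suc n) x \<le> e n x"
    using C1a C1b by auto
  from S obtain K C2 where KCa: "C2 > 0" and KCb: "\<forall>x y n. e (K n) (x + y) \<le> C2 * (e n x + e n y)"
    by blast
  have KC: "C2 > 0" "\<And>x y n. e (K n) (x + y) \<le> C2 * (e n x + e n y)"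
    using KCa KCb by auto
  from S obtain \<phi> where \<phi>a: "\<forall>c x n. e n (sm c x) \<le> \<phi> (norm c) * e n x" by blast
  have \<phi>: "\<And>c x n. e n (sm c x) \<le> \<phi> (norm c) * e n x" using \<phi>a by blast
  have z: "0 \<in> scale_space e"
  proof -
    have "e n 0 = 0" for n using C1(2)[where x=0 and n=n] nn[where x=0 and n=n] by simp
    then show ?thesis by (simp add: scale_space_def)
  qed
  have add: "x + y \<in> scale_space e" if "x \<in> scale_space e" "y \<in> scale_space e" for x y
  proof -
    have "(\<lambda>n. C2 * (e n x + e n y)) \<longlonglongrightarrow> C2 * (0 + 0)"
      using that unfolding scale_space_def by (intro tendsto_intros) auto
    then have g: "(\<lambda>n. C2 * (e n x + e n y)) \<longlonglongrightarrow> 0" by simp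
    have "(\<lambda>n. e n (x + y)) \<longlonglongrightarrow> 0"
      by (rule dec_tail2[where K=K and f="\<lambda>n. e n (x + y)", OF C1(3) nn g KC(2)])
    then show ?thesis by (simp add: scale_space_def)
  qed
  have sc: "sm c x \<in> scale_space e" if "x \<in> scale_space e" for c x
  proof -
    have "(\<lambda>n. \<phi> (norm c) * e n x) \<longlonglongrightarrow> \<phi> (norm c) * 0"
      using that unfolding scale_space_def by (intro tendsto_intros) auto
    then have g: "(\<lambda>n. \<phi> (norm c) * e n x) \<longlonglongrightarrow> 0" by simp
    have "(\<lambda>n. e n (sm c x)) \<longlonglongrightarrow> 0"
      by (rule dec_tail2[where K=id and f="\<lambda>n. e n (sm c x)", OF C1(3) nn g]) (simp add: \<phi>)
    then show ?thesis by (simp add: scale_space_def)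
  qed
  have sub: "module.subspace sm (scale_space e)"
    using z add sc by (simp add: module.subspace_def[OF md])
  have cl: "closed (scale_space e)"
    unfolding closed_sequential_limits
  proof (intro allI impI)
    fix s l assume h: "(\<forall>n. s n \<in> scale_space e) \<and> s \<longlonglongrightarrow> l"
    have "(\<lambda>n. e n l) \<longlonglongrightarrow> 0"
    proof (rule dec_tail[where K=K and f="\<lambda>n. e n l", OF C1(3) nn])
      fix \<epsilon> :: real assume ep: "\<epsilon> > 0"
      have "0 < \<epsilon> / (2 * C1 * C2)" using ep C1(1) KC(1) by simp
      then obtain k where k: "dist (s k) l < \<epsilon> / (2 * C1 * C2)"
        proof -
        from h have "s \<longlonglongrightarrow> l" by blast
        then obtain M where
          "\<forall>n\<ge>M. dist (s n) l < \<epsilon> / (2 * C1 * C2)"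
          using \<open>0 < \<epsilon> / (2 * C1 * C2)\<close> unfolding lim_sequentially by blast
        then have "dist (s M) l < \<epsilon> / (2 * C1 * C2)" by simp
        then show ?thesis by (rule that)
      qed
      have "s k \<in> scale_space e" using h by blast
      then have lk: "(\<lambda>n. e n (s k)) \<longlonglongrightarrow> 0" by (simp add: scale_space_def)
      have e2: "0 < \<epsilon> / (2 * C2)" using ep KC(1) by simp
      obtain N where N0: "\<forall>n\<ge>N. norm (e n (s k) - 0) < \<epsilon> / (2 * C2)"
        using LIMSEQ_D[OF lk e2] by blast
      have N: "\<forall>n\<ge>N. e n (s k) < \<epsilon> / (2 * C2)"
      proof (intro allI impI)
        fix n assume "N \<le> n"
        then have "norm (e n (s k) - 0) < \<epsilon> / (2 * C2)" using N0 by simp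
        then show "e n (s k) < \<epsilon> / (2 * C2)" by simp
      qed
      have dd: "dist (l - s k) 0 = dist (s k) l"
        using ti[where x="l - s k" and y=0 and z="s k"] by (simp add: dist_commute)
      show "\<exists>N. \<forall>n\<ge>N. e (K n) l < \<epsilon>"
      proof (intro exI allI impI)
        fix n assume "N \<le> n"
        then have a: "e n (s k) < \<epsilon> / (2 * C2)" using N by auto
        have b: "e n (l - s k) \<le> C1 * dist (s k) l" using C1(2)[where x="l - s k" and n=n] dd by simp
        have "e (K n) l \<le> C2 * (e n (l - s k) + e n (s k))"
        proof -
          have "l - s k + s k = l" by (rule diff_add_cancel)
          then show ?thesis using KC(2)[where x="l - s k" and y="s k" and n=n] by (rule subst)
        qed
        also have "\<dots> < \<epsilon>"
        proof -
          have c1: "C1 * dist (s k) l < C1 * (\<epsilon> / (2 * C1 * C2))" using k C1(1) by (rule mult_strict_left_mono)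
          have c2: "C1 * (\<epsilon> / (2 * C1 * C2)) = \<epsilon> / (2 * C2)" using C1(1) by simp
          have c3: "\<epsilon> / (2 * C2) + \<epsilon> / (2 * C2) = \<epsilon> / C2" by simp
          have "e n (l - s k) + e n (s k) < \<epsilon> / C2" using a b c1 c2 c3 by linarith
          then have "C2 * (e n (l - s k) + e n (s k)) < C2 * (\<epsilon> / C2)"
            using KC(1) by (rule mult_strict_left_mono)
          also have "C2 * (\<epsilon> / C2) = \<epsilon>" using KC(1) by simp
          finally show ?thesis .
        qed
        finally show "e (K n) l < \<epsilon>" .
      qed
    qed
    then show "l \<in> scale_space e" by (simp add: scale_space_def)
  qed
  show ?thesis using sub cl by blast
qed

end
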